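(* Let $G$ be a connected undirected simple graph on $n$ vertices with edge set $\mathcal E$ and nominal positive edge weights $\{\omega_{0,ij}\}_{\{i,j\}\in\mathcal E}$, with Laplacian $L_0$. For each edge let $\alpha_{\omega_{ij}}\in[0,1)$, and let $L$ be the Laplacian of the same graph with weights $\omega_{ij}$ satisfying $(1-\alpha_{\omega_{ij}})\omega_{0,ij}\le\omega_{ij}\le(1+\alpha_{\omega_{ij}})\omega_{0,ij}$. Put $\Delta=\sum_{\{i,j\}\in\mathcal E}\alpha_{\omega_{ij}}\omega_{0,ij}(e_i-e_j)(e_i-e_j)^\top$ and $a=\|L_0^\dagger\Delta\|$ (spectral norm), and assume $a<1$. Then $$(1-a)L_0\preceq L\preceq(1+a)L_0,$$ and, with zero time delay, the steady-state covariances $\Sigma=\frac12b^2L^\dagger$ and $\Sigma_0=\frac12b^2L_0^\dagger$ (same $b$) satisfy $(1-\varepsilon_\omega^-)\Sigma_0\preceq\Sigma\preceq(1+\varepsilon_\omega^+)\Sigma_0$, where $\varepsilon_\omega^-=\frac{\|\Delta L_0^\dagger\|}{1+\|\Delta L_0^\dagger\|}$ and $\varepsilon_\omega^+=\frac{\|\Delta L_0^\dagger\|}{1-\|\Delta L_0^\dagger\|}$.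
   Context: The Laplacian of a weighted graph with weights $\omega_{ij}$ is $L=\sum_{\{i,j\}\in\mathcal E}\omega_{ij}(e_i-e_j)(e_i-e_j)^\top$, where $e_k$ are standard basis vectors. $L^\dagger$ is the Moore–Penrose pseudoinverse. For zero delay, the network $\mathrm dx_t=-Lx_t\,\mathrm dt+b\,\mathrm dw_t$ ($w_t$ standard Brownian motion, $b\neq0$) has observables $y=(I_n-\frac1n\mathbf 1\mathbf 1^\top)x$ with steady-state law $\mathcal N(0,\frac12b^2L^\dagger)$. $A\preceq B$ means $B-A$ is positive semidefinite. *)

theory Defs
  imports "HOL-Analysis.Analysis"
begin

text \<open>Vertices are the elements of a finite type 'n (so n = CARD('n)).
  An undirected simple graph is a set E of 2-element vertex sets.\<close>

definition simple_graph :: "'n set set \<Rightarrow> bool" where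
  "simple_graph E \<longleftrightarrow> (\<forall>e\<in>E. card e = 2)"

definition graph_connected :: "'n set set \<Rightarrow> bool" where
  "graph_connected E \<longleftrightarrow> (\<forall>u v. (u, v) \<in> {(x, y). {x, y} \<in> E}\<^sup>*)"

definition outer :: "real^'n \<Rightarrow> real^'n \<Rightarrow> real^'n^'n" where
  "outer u v = (\<chi> k l. u $ k * v $ l)"

text \<open>For an edge e = {i,j}, the matrix (e_i - e_j)(e_i - e_j)^T
  (independent of the order of i and j).\<close>
definition edge_mat :: "'n::finite set \<Rightarrow> real^'n^'n" where
  "edge_mat e = (THE M. \<exists>i j. e = {i, j} \<and>
      M = outer (axis i 1 - axis j 1) (axis i 1 - axis j 1))"

definition laplacian :: "'n::finite set set \<Rightarrow> ('n set \<Rightarrow> real) \<Rightarrow> real^'n^'n" where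
  "laplacian E w = (\<Sum>e\<in>E. w e *\<^sub>R edge_mat e)"

definition penrose :: "real^'n^'n \<Rightarrow> real^'n^'n \<Rightarrow> bool" where
  "penrose A X \<longleftrightarrow> A ** X ** A = A \<and> X ** A ** X = X \<and>
     transpose (A ** X) = A ** X \<and> transpose (X ** A) = X ** A"

definition pinv :: "real^'n^'n \<Rightarrow> real^'n^'n" where
  "pinv A = (THE X. penrose A X)"

definition spec_norm :: "real^'n^'n \<Rightarrow> real" where
  "spec_norm A = onorm (\<lambda>x. A *v x)"

definition psd :: "real^'n^'n \<Rightarrow> bool" where
  "psd M \<longleftrightarrow> transpose M = M \<and> (\<forall>x. 0 \<le> x \<bullet> (M *v x))"

definition loewner_le :: "real^'n^'n \<Rightarrow> real^'n^'n \<Rightarrow> bool" where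
  "loewner_le A B \<longleftrightarrow> psd (B - A)"

end

theory Submission imports Defs begin

lemma dot_transpose: "(x::real^'n) \<bullet> (A *v y) = (transpose A *v x) \<bullet> y"
  by (simp add: dot_lmul_matrix)

lemma sym_dot: "transpose A = A \<Longrightarrow> (x::real^'n) \<bullet> (A *v y) = y \<bullet> (A *v x)"
  by (metis dot_transpose inner_commute)

lemma symI:
  fixes A :: "real^'n^'n"
  assumes "\<And>x y. x \<bullet> (A *v y) = y \<bullet> (A *v x)"
  shows "transpose A = A"
proof -
  have "transpose A *v x = A *v x" for x
  proof -
    have "(transpose A *v x - A *v x) \<bullet> y = 0" for y
    proof -
      have "(transpose A *v x) \<bullet> y = x \<bullet> (A *v y)" by (simp add: dot_transpose)
      also have "\<dots> = y \<bullet> (A *v x)" by (rule assms)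
      finally show ?thesis by (simp add: inner_diff_left inner_diff_right inner_commute)
    qed
    then have "\<forall>y. (transpose A *v x - A *v x) \<bullet> y = 0" by blast
    then show ?thesis by (metis eq_iff_diff_eq_0 inner_eq_zero_iff)
  qed
  then show ?thesis by (simp add: matrix_eq)
qed

lemma spec_norm_transpose_le:
  fixes A :: "real^'n^'n"
  shows "spec_norm (transpose A) \<le> spec_norm A"
  unfolding spec_norm_def
proof (rule onorm_le)
  fix x :: "real^'n"
  let ?s = "onorm ((*v) A)"
  have s0: "0 \<le> ?s" by (rule onorm_pos_le) simp
  have "norm (transpose A *v x) ^ 2 = x \<bullet> (A *v (transpose A *v x))"
    by (simp add: power2_norm_eq_inner dot_transpose[of x A])
  also have "\<dots> \<le> norm x * norm (A *v (transpose A *v x))"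
    by (rule norm_cauchy_schwarz)
  also have "\<dots> \<le> norm x * (?s * norm (transpose A *v x))"
    by (rule mult_left_mono[OF onorm]) simp_all
  finally have h: "norm (transpose A *v x) ^ 2 \<le> (?s * norm x) * norm (transpose A *v x)"
    by (simp add: ac_simps)
  show "norm (transpose A *v x) \<le> ?s * norm x"
  proof (cases "norm (transpose A *v x) = 0")
    case True then show ?thesis using s0 by simp
  next
    case False
    then have "0 < norm (transpose A *v x)" by simp
    with h show ?thesis by (simp add: power2_eq_square)
  qed
qed

lemma spec_norm_transpose: "spec_norm (transpose (A::real^'n^'n)) = spec_norm A"
  by (metis antisym spec_norm_transpose_le transpose_transpose)

lemma penrose_unique:
  fixes A X Y :: "real^'n^'n"
  assumes X: "penrose A X" and Y: "penrose A Y"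
  shows "X = Y"
proof -
  have x1: "A ** X ** A = A" "X ** A ** X = X" "transpose (A ** X) = A ** X" "transpose (X ** A) = X ** A"
    using X by (auto simp: penrose_def)
  have y1: "A ** Y ** A = A" "Y ** A ** Y = Y" "transpose (A ** Y) = A ** Y" "transpose (Y ** A) = Y ** A"
    using Y by (auto simp: penrose_def)
  have tA: "transpose A = transpose A ** transpose Y ** transpose A"
    by (metis y1(1) matrix_transpose_mul matrix_mul_assoc)
  have tA2: "transpose A = transpose A ** transpose X ** transpose A"
    by (metis x1(1) matrix_transpose_mul matrix_mul_assoc)
  have "X = X ** (A ** X)" using x1 by (simp add: matrix_mul_assoc)
  also have "\<dots> = X ** (transpose X ** transpose A)" by (metis x1(3) matrix_transpose_mul)
  also have "\<dots> = X ** (transpose X ** transpose A ** transpose Y ** transpose A)"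
    by (metis tA matrix_mul_assoc)
  also have "\<dots> = X ** (transpose (A ** X) ** transpose (A ** Y))"
    by (simp add: matrix_transpose_mul matrix_mul_assoc)
  also have "\<dots> = X ** A ** X ** A ** Y" using x1 y1 by (simp add: matrix_mul_assoc)
  also have "\<dots> = X ** A ** Y" using x1 by simp
  finally have eX: "X = X ** A ** Y" .
  have "Y = (Y ** A) ** Y" using y1 by simp
  also have "\<dots> = (transpose A ** transpose Y) ** Y" by (metis y1(4) matrix_transpose_mul)
  also have "\<dots> = (transpose A ** transpose X ** transpose A ** transpose Y) ** Y"
    by (metis tA2 matrix_mul_assoc)
  also have "\<dots> = (transpose (X ** A) ** transpose (Y ** A)) ** Y"
    by (simp add: matrix_transpose_mul matrix_mul_assoc)
  also have "\<dots> = X ** A ** (Y ** A ** Y)" by (metis x1(4) y1(4) matrix_mul_assoc)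
  also have "\<dots> = X ** A ** Y" by (metis y1(2))
  finally show ?thesis using eX by simp
qed

definition Pf :: "real^'n \<Rightarrow> real^'n" where
  "Pf x = x - ((1 \<bullet> x) / real CARD('n)) *\<^sub>R 1"

definition goodm :: "real^'n^'n \<Rightarrow> bool" where
  "goodm K \<longleftrightarrow> transpose K = K \<and> K *v 1 = 0 \<and> (\<forall>x. 0 \<le> x \<bullet> (K *v x)) \<and>
     (\<forall>x. x \<bullet> (K *v x) = 0 \<longrightarrow> (\<exists>c. x = c *\<^sub>R 1))"

lemma scaleR_mv: "((c::real) *\<^sub>R (A::real^'n^'m)) *v x = c *\<^sub>R (A *v x)"
  by (simp add: vec_eq_iff matrix_vector_mult_def sum_distrib_left mult.assoc)

lemma one_dot_one: "(1::real^'n) \<bullet> 1 = real CARD('n)"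
  by (simp add: inner_vec_def)

lemma one_dot_Pf: "(1::real^'n) \<bullet> Pf x = 0"
  by (simp add: Pf_def inner_diff_right one_dot_one)

lemma Pf_dot_zero: "(1::real^'n) \<bullet> x = 0 \<Longrightarrow> Pf x = x"
  by (simp add: Pf_def)

lemma Pf_idem: "Pf (Pf x) = Pf x"
  by (simp add: Pf_dot_zero one_dot_Pf)

lemma Pf_sym: "y \<bullet> Pf x = x \<bullet> Pf (y::real^'n)"
  by (simp add: Pf_def inner_diff_right inner_commute)

lemma Jm_mult: "((\<chi> i j. 1) :: real^'n^'n) *v x = (1 \<bullet> x) *\<^sub>R (1::real^'n)"
  by (simp add: vec_eq_iff matrix_vector_mult_def inner_vec_def)

lemma one_dot_K: "transpose K = K \<Longrightarrow> K *v 1 = 0 \<Longrightarrow> (1::real^'n) \<bullet> (K *v x) = 0"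
  by (metis sym_dot inner_zero_right)

lemma good_pinv_ex:
  fixes K :: "real^'n^'n"
  assumes g: "goodm K"
  shows "\<exists>X. penrose K X \<and> transpose X = X \<and> (\<forall>x. K *v (X *v x) = Pf x) \<and> (\<forall>x. X *v (K *v x) = Pf x) \<and> (\<forall>x. 1 \<bullet> (X *v x) = 0)"
proof -
  have symK: "transpose K = K" and K1: "K *v 1 = 0" and psd: "\<And>x. 0 \<le> x \<bullet> (K *v x)"
    and ker: "\<And>x. x \<bullet> (K *v x) = 0 \<Longrightarrow> \<exists>c. x = c *\<^sub>R 1"
    using g by (auto simp: goodm_def)
  define J where "J = ((\<chi> i j. 1) :: real^'n^'n)"
  define M where "M = K + J"
  have Mx: "M *v x = K *v x + (1 \<bullet> x) *\<^sub>R 1" for x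
    by (simp add: M_def J_def matrix_vector_mult_add_rdistrib Jm_mult)
  have n0: "0 < real CARD('n)" by simp
  have "\<forall>x. M *v x = 0 \<longrightarrow> x = 0"
  proof (intro allI impI)
    fix x assume "M *v x = 0"
    then have "x \<bullet> (M *v x) = 0" by simp
    then have "x \<bullet> (K *v x) + (1 \<bullet> x)^2 = 0"
      by (simp add: Mx inner_add_right power2_eq_square inner_commute)
    moreover have "0 \<le> x \<bullet> (K *v x)" by (rule psd)
    ultimately have a: "x \<bullet> (K *v x) = 0" and sq: "(1 \<bullet> x)^2 = 0"
      using zero_le_power2[of "1 \<bullet> x"] by linarith+
    from sq have b: "1 \<bullet> x = 0" by simp
    obtain c where c: "x = c *\<^sub>R 1" using ker[OF a] by blast
    with b have "c * real CARD('n) = 0" by (simp add: one_dot_one)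
    then have "c = 0" using n0 by simp
    then show "x = 0" using c by simp
  qed
  then obtain Mi where "Mi ** M = mat 1"
    using matrix_left_invertible_ker by blast
  then have Mi1: "Mi ** M = mat 1" and Mi2: "M ** Mi = mat 1"
    using matrix_left_right_inverse by blast+
  have MMi: "M *v (Mi *v z) = z" for z using Mi2 by (simp add: matrix_vector_mul_assoc)
  have MiM: "Mi *v (M *v z) = z" for z using Mi1 by (simp add: matrix_vector_mul_assoc)
  define Pm where "Pm = mat 1 - (1 / real CARD('n)) *\<^sub>R J"
  have Pmx: "Pm *v x = Pf x" for x
    by (simp add: Pm_def Pf_def matrix_vector_mult_diff_rdistrib J_def Jm_mult scaleR_mv)
  define X where "X = Mi ** Pm"
  have Xx: "X *v x = Mi *v Pf x" for x
    by (simp add: X_def Pmx matrix_vector_mul_assoc[symmetric])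
  have oneK: "1 \<bullet> (K *v x) = 0" for x using one_dot_K[OF symK K1] .
  have KX: "K *v (X *v x) = Pf x" and oneX: "1 \<bullet> (X *v x) = 0" for x
  proof -
    let ?y = "X *v x"
    have "M *v ?y = Pf x" by (simp add: Xx MMi)
    then have e: "K *v ?y + (1 \<bullet> ?y) *\<^sub>R 1 = Pf x" by (simp add: Mx)
    then have "1 \<bullet> (K *v ?y + (1 \<bullet> ?y) *\<^sub>R 1) = 0" by (simp add: one_dot_Pf)
    then have "(1 \<bullet> ?y) * real CARD('n) = 0" by (simp add: inner_add_right oneK one_dot_one)
    then show o: "1 \<bullet> ?y = 0" using n0 by simp
    show "K *v ?y = Pf x" using e o by simp
  qed
  have M1: "M *v 1 = real CARD('n) *\<^sub>R 1" by (simp add: Mx K1 one_dot_one)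
  have Mi1v: "Mi *v 1 = (1 / real CARD('n)) *\<^sub>R 1"
  proof -
    have "Mi *v (M *v 1) = 1" by (rule MiM)
    then have "real CARD('n) *\<^sub>R (Mi *v 1) = 1" by (simp add: M1 matrix_vector_mult_scaleR)
    then have "(1 / real CARD('n)) *\<^sub>R (real CARD('n) *\<^sub>R (Mi *v 1)) = (1 / real CARD('n)) *\<^sub>R 1"
      by simp
    then show ?thesis using n0 by simp
  qed
  have XK: "X *v (K *v x) = Pf x" for x
  proof -
    have "X *v (K *v x) = Mi *v (K *v x)" by (simp add: Xx Pf_dot_zero oneK)
    also have "Mi *v (K *v x) = Mi *v (M *v x - (1 \<bullet> x) *\<^sub>R 1)" by (simp add: Mx)
    also have "Mi *v (M *v x - (1 \<bullet> x) *\<^sub>R 1) = x - (1 \<bullet> x) *\<^sub>R (Mi *v 1)"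
      by (simp add: matrix_vector_mult_diff_distrib matrix_vector_mult_scaleR MiM)
    finally show ?thesis by (simp add: Mi1v Pf_def)
  qed
  have symX: "transpose X = X"
  proof (rule symI)
    fix x y :: "real^'n"
    have a: "y \<bullet> (X *v x) = (X *v y) \<bullet> Pf x" for x y
    proof -
      have "y \<bullet> (X *v x) = Pf y \<bullet> (X *v x)"
        by (simp add: Pf_def inner_diff_left oneX)
      also have "\<dots> = (K *v (X *v y)) \<bullet> (X *v x)" by (simp add: KX)
      also have "\<dots> = (X *v y) \<bullet> (K *v (X *v x))"
        by (metis dot_transpose symK inner_commute)
      also have "\<dots> = (X *v y) \<bullet> Pf x" by (simp add: KX)
      finally show ?thesis .
    qed
    have b: "(X *v y) \<bullet> Pf x = (X *v y) \<bullet> x"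
      by (simp add: Pf_def inner_diff_right oneX inner_commute)
    have c: "(X *v x) \<bullet> Pf y = (X *v x) \<bullet> y"
      by (simp add: Pf_def inner_diff_right oneX inner_commute)
    show "x \<bullet> (X *v y) = y \<bullet> (X *v x)"
      using a[of x y] a[of y x] b c by (simp add: inner_commute)
  qed
  have PfK: "Pf (K *v x) = K *v x" for x by (simp add: Pf_dot_zero oneK)
  have PfX: "Pf (X *v x) = X *v x" for x by (simp add: Pf_dot_zero oneX)
  have KPf: "K *v Pf x = K *v x" for x
    by (simp add: Pf_def matrix_vector_mult_diff_distrib matrix_vector_mult_scaleR K1)
  have symP: "\<And>A::real^'n^'n. (\<forall>x. A *v x = Pf x) \<Longrightarrow> transpose A = A"
    by (rule symI) (simp add: Pf_sym)
  have "penrose K X"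
    unfolding penrose_def
  proof (intro conjI)
    show "K ** X ** K = K"
      by (simp add: matrix_eq matrix_vector_mul_assoc[symmetric] XK KPf)
    show "X ** K ** X = X"
      by (simp only: matrix_eq matrix_vector_mul_assoc[symmetric] KX) (simp add: Xx Pf_idem)
    show "transpose (K ** X) = K ** X"
      by (rule symP) (simp add: matrix_vector_mul_assoc[symmetric] KX)
    show "transpose (X ** K) = X ** K"
      by (rule symP) (simp add: matrix_vector_mul_assoc[symmetric] XK)
  qed
  then show ?thesis using symX KX XK oneX by blast
qed

lemma good_pinv:
  fixes K :: "real^'n^'n"
  assumes g: "goodm K"
  shows "transpose (pinv K) = pinv K" "\<And>x. K *v (pinv K *v x) = Pf x" "\<And>x. pinv K *v (K *v x) = Pf x"
    "\<And>x. 1 \<bullet> (pinv K *v x) = 0"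
proof -
  obtain X where X: "penrose K X" "transpose X = X" "\<forall>x. K *v (X *v x) = Pf x" "\<forall>x. X *v (K *v x) = Pf x"
     "\<forall>x. 1 \<bullet> (X *v x) = 0"
    using good_pinv_ex[OF g] by blast
  have "pinv K = X" unfolding pinv_def
    apply (rule the_equality[of "penrose K" X])
     apply (rule X(1))
    using penrose_unique X(1) by blast
  then show "transpose (pinv K) = pinv K" "\<And>x. K *v (pinv K *v x) = Pf x" "\<And>x. pinv K *v (K *v x) = Pf x"
    "\<And>x. 1 \<bullet> (pinv K *v x) = 0"
    using X by auto
qed

lemma outer_mv: "outer u u *v (y::real^'n) = (u \<bullet> y) *\<^sub>R u"
  by (auto simp: vec_eq_iff outer_def matrix_vector_mult_def inner_vec_def sum_distrib_left sum_distrib_right ac_simps intro!: sum.cong)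

lemma outer_neg: "outer (- u) (- u) = outer u (u::real^'n)"
  by (simp add: outer_def)

lemma outer_dot: "(x::real^'n) \<bullet> (outer u u *v y) = (u \<bullet> x) * (u \<bullet> y)"
  by (simp add: outer_mv inner_commute)

lemma axis_dot: "(axis i 1 - axis j 1) \<bullet> (x::real^'n) = x $ i - x $ j"
  by (simp add: inner_diff_left inner_commute[of "axis _ _"] inner_axis)

lemma edge_mat_pair:
  fixes i j :: "'n::finite"
  shows "edge_mat {i, j} = outer (axis i 1 - axis j 1) (axis i 1 - axis j 1)"
  unfolding edge_mat_def
proof (rule the_equality)
  show "\<exists>i' j'. {i, j} = {i', j'} \<and> outer (axis i 1 - axis j 1) (axis i 1 - axis j 1) =
      outer (axis i' 1 - axis j' 1) (axis i' 1 - axis j' 1)" by blast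
next
  fix M assume "\<exists>i' j'. {i, j} = {i', j'} \<and> M = outer (axis i' 1 - axis j' 1) (axis i' 1 - axis j' 1)"
  then obtain i' j' where e: "{i, j} = {i', j'}" and M: "M = outer (axis i' 1 - axis j' 1) (axis i' 1 - axis j' 1)"
    by blast
  from e have "(i = i' \<and> j = j') \<or> (i = j' \<and> j = i')" by (auto simp: doubleton_eq_iff)
  then show "M = outer (axis i 1 - axis j 1) (axis i 1 - axis j 1)"
  proof
    assume "i = i' \<and> j = j'" then show ?thesis using M by simp
  next
    assume "i = j' \<and> j = i'"
    then have "axis i' (1::real) - axis j' 1 = - (axis i 1 - axis j 1)" by simp
    then show ?thesis using M by (simp only: outer_neg)
  qed
qed

lemma edge_dot:
  fixes e :: "'n::finite set"
  assumes "card e = 2"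
  shows "\<exists>i j. e = {i, j} \<and> (\<forall>x y. x \<bullet> (edge_mat e *v y) = (x $ i - x $ j) * (y $ i - y $ j))"
proof -
  obtain i j where "e = {i, j}" using assms by (auto simp: card_2_iff)
  then show ?thesis
    by (intro exI[of _ i] exI[of _ j]) (simp add: edge_mat_pair outer_dot axis_dot)
qed

lemma sum_mv: "finite S \<Longrightarrow> (\<Sum>e\<in>S. f e) *v (y::real^'n) = (\<Sum>e\<in>S. f e *v y)"
  by (induction S rule: finite_induct) (simp_all add: matrix_vector_mult_add_rdistrib)

lemma lap_dot:
  fixes E :: "'n::finite set set"
  shows "x \<bullet> (laplacian E w *v y) = (\<Sum>e\<in>E. w e * (x \<bullet> (edge_mat e *v y)))"
  by (simp add: laplacian_def sum_mv[OF finite] inner_sum_right scaleR_mv)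

lemma lap_sym:
  fixes E :: "'n::finite set set"
  assumes "simple_graph E"
  shows "transpose (laplacian E w) = laplacian E w"
proof (rule symI)
  fix x y :: "real^'n"
  have "x \<bullet> (edge_mat e *v y) = y \<bullet> (edge_mat e *v x)" if "e \<in> E" for e
  proof -
    have "card e = 2" using assms that by (auto simp: simple_graph_def)
    then obtain i j where d: "\<forall>x y. x \<bullet> (edge_mat e *v y) = (x $ i - x $ j) * (y $ i - y $ j)"
      using edge_dot[of e] by blast
    show ?thesis by (simp only: d) (simp add: algebra_simps)
  qed
  then show "x \<bullet> (laplacian E w *v y) = y \<bullet> (laplacian E w *v x)"
    by (simp add: lap_dot)
qed

lemma lap_one:
  fixes E :: "'n::finite set set"
  assumes "simple_graph E"
  shows "laplacian E w *v 1 = 0"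
proof -
  have "x \<bullet> (edge_mat e *v 1) = 0" if "e \<in> E" for e x
  proof -
    have "card e = 2" using assms that by (auto simp: simple_graph_def)
    then obtain i j where d: "\<forall>x y. x \<bullet> (edge_mat e *v y) = (x $ i - x $ j) * (y $ i - y $ j)"
      using edge_dot[of e] by blast
    show ?thesis by (simp only: d) simp
  qed
  then have "x \<bullet> (laplacian E w *v 1) = 0" for x by (simp add: lap_dot)
  then show ?thesis by (metis inner_eq_zero_iff)
qed

lemma edge_q_nonneg:
  fixes E :: "'n::finite set set"
  assumes "simple_graph E" "e \<in> E"
  shows "0 \<le> x \<bullet> (edge_mat e *v x)"
proof -
  have "card e = 2" using assms by (auto simp: simple_graph_def)
  then obtain i j where d: "\<forall>x y. x \<bullet> (edge_mat e *v y) = (x $ i - x $ j) * (y $ i - y $ j)"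
    using edge_dot[of e] by blast
  show ?thesis by (simp only: d) simp
qed

lemma lap_good:
  fixes E :: "'n::finite set set"
  assumes simple: "simple_graph E" and conn: "graph_connected E" and pos: "\<forall>e\<in>E. 0 < w e"
  shows "goodm (laplacian E w)"
  unfolding goodm_def
proof (intro conjI allI impI)
  show "transpose (laplacian E w) = laplacian E w" by (rule lap_sym[OF simple])
  show "laplacian E w *v 1 = 0" by (rule lap_one[OF simple])
  fix x :: "real^'n"
  have tn: "0 \<le> w e * (x \<bullet> (edge_mat e *v x))" if "e \<in> E" for e
  proof -
    have "0 < w e" using pos that by blast
    moreover have "0 \<le> x \<bullet> (edge_mat e *v x)" by (rule edge_q_nonneg[OF simple that])
    ultimately show ?thesis by simp
  qed
  show "0 \<le> x \<bullet> (laplacian E w *v x)"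
    unfolding lap_dot by (rule sum_nonneg) (rule tn)
  assume "x \<bullet> (laplacian E w *v x) = 0"
  then have "(\<Sum>e\<in>E. w e * (x \<bullet> (edge_mat e *v x))) = 0" by (simp only: lap_dot)
  then have z: "w e * (x \<bullet> (edge_mat e *v x)) = 0" if "e \<in> E" for e
    using sum_nonneg_eq_0_iff[of E "\<lambda>e. w e * (x \<bullet> (edge_mat e *v x))"] tn that
    by simp
  have eq: "x $ a = x $ b" if ab: "{a, b} \<in> E" for a b
  proof -
    have "card {a, b} = 2" using simple ab by (simp add: simple_graph_def)
    then obtain i j where ij: "{a, b} = {i, j}" and d: "\<forall>x y. x \<bullet> (edge_mat {a,b} *v y) = (x $ i - x $ j) * (y $ i - y $ j)"
      using edge_dot[of "{a,b}"] by blast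
    have wp: "0 < w {a,b}" using pos ab by blast
    have "w {a,b} * ((x $ i - x $ j) * (x $ i - x $ j)) = 0" using z[OF ab] d by simp
    then have "(x $ i - x $ j) * (x $ i - x $ j) = 0" using wp by simp
    then have "x $ i = x $ j" by simp
    moreover have "(a = i \<and> b = j) \<or> (a = j \<and> b = i)" using ij by (simp add: doubleton_eq_iff)
    ultimately show ?thesis by auto
  qed
  have "x $ u = x $ v" for u v
  proof -
    have "(u, v) \<in> {(x, y). {x, y} \<in> E}\<^sup>*" using conn by (simp add: graph_connected_def)
    then show ?thesis
    proof (induction rule: rtrancl_induct)
      case base then show ?case by (rule refl)
    next
      case (step y z)
      then have "{y, z} \<in> E" by simp
      then have "x $ y = x $ z" by (rule eq)
      then show ?case using step.IH by simp
    qed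
  qed
  then have "x = (x $ undefined) *\<^sub>R 1" by (simp add: vec_eq_iff)
  then show "\<exists>c. x = c *\<^sub>R 1" by blast
qed

lemma quad_disc:
  fixes A B C :: real
  assumes C: "0 \<le> C" and h: "\<And>t. 0 \<le> A + 2 * t * B + t^2 * C"
  shows "B^2 \<le> A * C"
proof (cases "C = 0")
  case True
  have "B = 0"
  proof (rule ccontr)
    assume "B \<noteq> 0"
    have "0 \<le> A + 2 * (- (A + 1) / (2 * B)) * B + (- (A + 1) / (2 * B))^2 * C" by (rule h)
    also have "\<dots> = -1" using True \<open>B \<noteq> 0\<close> by (simp add: field_simps)
    finally show False by simp
  qed
  then show ?thesis using True by simp
next
  case False
  then have Cp: "0 < C" using C by simp
  have "0 \<le> A + 2 * (- B / C) * B + (- B / C)^2 * C" by (rule h)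
  also have "\<dots> = A - B^2 / C" using Cp by (simp add: field_simps power2_eq_square)
  finally have "B^2 / C \<le> A" by simp
  then show ?thesis using Cp by (simp add: pos_divide_le_eq mult.commute)
qed

lemma cs_form:
  fixes K :: "real^'n^'n"
  assumes symK: "transpose K = K" and psd: "\<And>x. 0 \<le> x \<bullet> (K *v x)"
  shows "(u \<bullet> (K *v v))^2 \<le> (u \<bullet> (K *v u)) * (v \<bullet> (K *v v))"
proof (rule quad_disc[OF psd])
  fix t :: real
  have s: "v \<bullet> (K *v u) = u \<bullet> (K *v v)" by (rule sym_dot[OF symK])
  have "0 \<le> (u + t *\<^sub>R v) \<bullet> (K *v (u + t *\<^sub>R v))" by (rule psd)
  also have "\<dots> = u \<bullet> (K *v u) + t * (v \<bullet> (K *v u)) + t * (u \<bullet> (K *v v)) + t * t * (v \<bullet> (K *v v))"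
    by (simp add: matrix_vector_right_distrib matrix_vector_mult_scaleR inner_add_left inner_add_right algebra_simps)
  also have "\<dots> = u \<bullet> (K *v u) + 2 * t * (u \<bullet> (K *v v)) + t^2 * (v \<bullet> (K *v v))"
    using s by (simp add: power2_eq_square algebra_simps)
  finally show "0 \<le> u \<bullet> (K *v u) + 2 * t * (u \<bullet> (K *v v)) + t^2 * (v \<bullet> (K *v v))" .
qed

lemma limit_lemma:
  fixes r a q C :: real
  assumes a: "0 \<le> a" and q: "0 \<le> q" and C: "0 \<le> C"
    and h: "\<And>k. r ^ (2^k) \<le> C * a ^ (2^k) * q ^ (2^k - 1)"
  shows "r \<le> a * q"
proof (rule ccontr)
  assume "\<not> r \<le> a * q"
  then have lt: "a * q < r" by simp
  have aq0: "0 \<le> a * q" using a q by simp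
  then have r0: "0 < r" using lt by simp
  show False
  proof (cases "a * q = 0")
    case True
    have "r ^ 2 \<le> C * a ^ 2 * q" using h[of 1] by simp
    also have "C * a ^ 2 * q = C * a * (a * q)" by (simp add: power2_eq_square)
    also have "\<dots> = 0" using True by simp
    finally have "r * r \<le> 0" by (simp add: power2_eq_square)
    moreover have "0 < r * r" using r0 by (rule mult_pos_pos) (rule r0)
    ultimately show False by simp
  next
    case False
    then have tp: "0 < a * q" using aq0 by linarith
    then have qp: "0 < q" and ap: "0 < a" using a q by (auto simp: zero_less_mult_iff)
    define t where "t = a * q"
    have tp': "0 < t" using tp by (simp add: t_def)
    define \<rho> where "\<rho> = r / t"
    have rho1: "1 < \<rho>" using lt tp' by (simp add: \<rho>_def t_def)
    have bnd: "\<rho> ^ (2^k) \<le> C / q" for k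
    proof -
      have N: "(2::nat)^k = Suc (2^k - 1)" by simp
      have "r ^ (2^k) \<le> C * a ^ (2^k) * q ^ (2^k - 1)" by (rule h)
      also have "\<dots> = (C / q) * t ^ (2^k)"
      proof -
        have qq: "q ^ (2^k) = q * q ^ (2^k - 1)" by (metis N power_Suc)
        show ?thesis using qp unfolding t_def power_mult_distrib qq by (simp add: field_simps)
      qed
      finally have "r ^ (2^k) \<le> (C / q) * t ^ (2^k)" .
      then show ?thesis using tp' by (simp add: \<rho>_def power_divide pos_divide_le_eq)
    qed
    obtain n where n: "C / q < \<rho> ^ n" using real_arch_pow[OF rho1] by blast
    have "\<rho> ^ n \<le> \<rho> ^ (2^n)"
      by (rule power_increasing) (use rho1 less_exp[of n] in auto)
    then show False using n bnd[of n] by simp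
  qed
qed

lemma rayleigh:
  fixes K D :: "real^'n^'n"
  assumes g: "goodm K" and symD: "transpose D = D" and D1: "D *v 1 = 0"
  shows "x \<bullet> (D *v x) \<le> spec_norm (pinv K ** D) * (x \<bullet> (K *v x))"
proof -
  have symK: "transpose K = K" and psd: "\<And>x. 0 \<le> x \<bullet> (K *v x)"
    using g by (auto simp: goodm_def)
  define X where "X = pinv K"
  have KX: "K *v (X *v z) = Pf z" for z using good_pinv(2)[OF g] by (simp add: X_def)
  define a where "a = spec_norm (X ** D)"
  have a0: "0 \<le> a" unfolding a_def spec_norm_def by (rule onorm_pos_le) simp
  define T where "T = (\<lambda>y. X *v (D *v y))"
  define B where "B = (\<lambda>u v. u \<bullet> (K *v v))"
  have Bsym: "B u v = B v u" for u v unfolding B_def by (rule sym_dot[OF symK])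
  have PfD: "Pf (D *v y) = D *v y" for y by (rule Pf_dot_zero[OF one_dot_K[OF symD D1]])
  have adj: "B (T u) v = B u (T v)" for u v
  proof -
    have "B (T u) v = v \<bullet> (K *v T u)" by (simp add: B_def sym_dot[OF symK])
    also have "\<dots> = v \<bullet> (D *v u)" by (simp add: T_def KX PfD)
    also have "\<dots> = u \<bullet> (D *v v)" by (rule sym_dot[OF symD])
    also have "\<dots> = B u (T v)" by (simp add: B_def T_def KX PfD)
    finally show ?thesis .
  qed
  have BTx: "B (T x) x = x \<bullet> (D *v x)"
  proof -
    have "B (T x) x = x \<bullet> (K *v T x)" by (simp add: B_def sym_dot[OF symK])
    also have "\<dots> = x \<bullet> (D *v x)" by (simp add: T_def KX PfD)
    finally show ?thesis .
  qed
  have adjm: "B ((T ^^ m) u) v = B u ((T ^^ m) v)" for m u v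
  proof (induction m arbitrary: u v)
    case 0 then show ?case by simp
  next
    case (Suc m)
    have "B ((T ^^ Suc m) u) v = B (T ((T ^^ m) u)) v" by simp
    also have "\<dots> = B ((T ^^ m) u) (T v)" by (rule adj)
    also have "\<dots> = B u ((T ^^ m) (T v))" by (rule Suc.IH)
    also have "\<dots> = B u ((T ^^ Suc m) v)" by (simp add: funpow_swap1)
    finally show ?case .
  qed
  have normT: "norm (T y) \<le> a * norm y" for y
  proof -
    have "T y = (X ** D) *v y" by (simp add: T_def matrix_vector_mul_assoc)
    then show ?thesis unfolding a_def spec_norm_def by (simp add: onorm)
  qed
  have normTm: "norm ((T ^^ m) y) \<le> a ^ m * norm y" for m y
  proof (induction m)
    case 0 then show ?case by simp
  next
    case (Suc m)
    have "norm ((T ^^ Suc m) y) = norm (T ((T ^^ m) y))" by simp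
    also have "\<dots> \<le> a * norm ((T ^^ m) y)" by (rule normT)
    also have "\<dots> \<le> a * (a ^ m * norm y)" by (rule mult_left_mono[OF Suc.IH a0])
    finally show ?case by (simp add: mult.assoc)
  qed
  define q where "q = B x x"
  have q0: "0 \<le> q" unfolding q_def B_def by (rule psd)
  define gg where "gg = (\<lambda>m. B ((T ^^ m) x) x)"
  have g1: "gg 1 = x \<bullet> (D *v x)" by (simp add: gg_def BTx)
  have gsq: "(gg m)^2 \<le> gg (2 * m) * q" for m
  proof -
    have "(gg m)^2 \<le> B ((T ^^ m) x) ((T ^^ m) x) * B x x"
      unfolding gg_def B_def by (rule cs_form[OF symK psd])
    also have "B ((T ^^ m) x) ((T ^^ m) x) = B x ((T ^^ m) ((T ^^ m) x))" by (rule adjm)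
    also have "\<dots> = B x ((T ^^ (2 * m)) x)" by (simp add: mult_2 funpow_add)
    also have "\<dots> = gg (2 * m)" by (simp add: gg_def Bsym)
    finally show ?thesis by (simp add: q_def)
  qed
  define Cc where "Cc = norm x * norm (K *v x)"
  have Cc0: "0 \<le> Cc" by (simp add: Cc_def)
  have gb: "gg m \<le> Cc * a ^ m" for m
  proof -
    have "gg m \<le> norm ((T ^^ m) x) * norm (K *v x)" unfolding gg_def B_def
      by (rule norm_cauchy_schwarz)
    also have "\<dots> \<le> (a ^ m * norm x) * norm (K *v x)"
      by (rule mult_right_mono[OF normTm]) simp
    finally show ?thesis by (simp add: Cc_def ac_simps)
  qed
  show ?thesis
  proof (cases "x \<bullet> (D *v x) \<le> 0")
    case True
    have "0 \<le> spec_norm (pinv K ** D) * (x \<bullet> (K *v x))"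
      using a0 psd[of x] by (simp add: a_def X_def)
    then show ?thesis using True by linarith
  next
    case False
    define r where "r = x \<bullet> (D *v x)"
    have r0: "0 < r" using False by (simp add: r_def)
    have chain: "r ^ (2^k) \<le> gg (2^k) * q ^ (2^k - 1)" for k
    proof (induction k)
      case 0 then show ?case using g1 by (simp add: r_def)
    next
      case (Suc k)
      obtain p where p: "(2::nat)^k = Suc p" using not0_implies_Suc[of "(2::nat)^k"] by auto
      have "r ^ (2 ^ Suc k) = (r ^ (2^k))^2" by (simp add: power_mult[symmetric] mult.commute)
      also have "\<dots> \<le> (gg (2^k) * q ^ (2^k - 1))^2"
        by (rule power_mono[OF Suc.IH]) (simp add: r0 less_imp_le)
      also have "\<dots> = (gg (2^k))^2 * (q ^ (2^k - 1))^2" by (simp add: power_mult_distrib)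
      also have "\<dots> \<le> (gg (2 * 2^k) * q) * (q ^ (2^k - 1))^2"
        by (rule mult_right_mono[OF gsq]) simp
      also have "\<dots> = gg (2 ^ Suc k) * q ^ (2 ^ Suc k - 1)"
        by (simp add: p power_mult[symmetric] power_add ac_simps)
      finally show ?case .
    qed
    have "r ^ (2^k) \<le> Cc * a ^ (2^k) * q ^ (2^k - 1)" for k
    proof -
      have "r ^ (2^k) \<le> gg (2^k) * q ^ (2^k - 1)" by (rule chain)
      also have "\<dots> \<le> (Cc * a ^ (2^k)) * q ^ (2^k - 1)"
        by (rule mult_right_mono[OF gb]) (simp add: q0)
      finally show ?thesis .
    qed
    then have "r \<le> a * q" by (rule limit_lemma[OF a0 q0 Cc0])
    then show ?thesis by (simp add: r_def a_def X_def q_def B_def)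
  qed
qed

lemma variational:
  fixes K :: "real^'n^'n"
  assumes g: "goodm K"
  shows "2 * (y \<bullet> Pf x) - y \<bullet> (K *v y) \<le> x \<bullet> (pinv K *v x)"
    and "2 * ((pinv K *v x) \<bullet> Pf x) - (pinv K *v x) \<bullet> (K *v (pinv K *v x)) = x \<bullet> (pinv K *v x)"
proof -
  have symK: "transpose K = K" and psd: "\<And>x. 0 \<le> x \<bullet> (K *v x)"
    using g by (auto simp: goodm_def)
  define X where "X = pinv K"
  have KX: "K *v (X *v z) = Pf z" for z using good_pinv(2)[OF g] by (simp add: X_def)
  have oneX: "1 \<bullet> (X *v z) = 0" for z using good_pinv(4)[OF g] by (simp add: X_def)
  have XPf: "(X *v x) \<bullet> Pf x = x \<bullet> (X *v x)"
    by (simp add: Pf_sym[of "X *v x" x] Pf_dot_zero oneX)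
  have s: "(X *v x) \<bullet> (K *v y) = y \<bullet> (K *v (X *v x))" by (rule sym_dot[OF symK])
  have "0 \<le> (y - X *v x) \<bullet> (K *v (y - X *v x))" by (rule psd)
  also have "\<dots> = y \<bullet> (K *v y) - y \<bullet> (K *v (X *v x)) - (X *v x) \<bullet> (K *v y) + (X *v x) \<bullet> (K *v (X *v x))"
    by (simp add: matrix_vector_mult_diff_distrib inner_diff_left inner_diff_right)
  also have "\<dots> = y \<bullet> (K *v y) - 2 * (y \<bullet> Pf x) + x \<bullet> (X *v x)"
    using s by (simp add: KX XPf)
  finally show "2 * (y \<bullet> Pf x) - y \<bullet> (K *v y) \<le> x \<bullet> (pinv K *v x)" by (simp add: X_def)
  show "2 * ((pinv K *v x) \<bullet> Pf x) - (pinv K *v x) \<bullet> (K *v (pinv K *v x)) = x \<bullet> (pinv K *v x)"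
    using KX XPf by (simp add: X_def)
qed

lemma pinv_compare:
  fixes A B :: "real^'n^'n"
  assumes gA: "goodm A" and gB: "goodm B" and t: "0 < t"
    and h: "\<And>x. x \<bullet> (A *v x) \<le> t * (x \<bullet> (B *v x))"
  shows "x \<bullet> (pinv B *v x) \<le> t * (x \<bullet> (pinv A *v x))"
proof -
  define y where "y = pinv B *v x"
  have e: "x \<bullet> (pinv B *v x) = 2 * (y \<bullet> Pf x) - y \<bullet> (B *v y)"
    using variational(2)[OF gB, of x] by (simp add: y_def)
  have hb: "y \<bullet> (A *v y) / t \<le> y \<bullet> (B *v y)" using h[of y] t by (simp add: divide_le_eq mult.commute)
  have "2 * ((y /\<^sub>R t) \<bullet> Pf x) - (y /\<^sub>R t) \<bullet> (A *v (y /\<^sub>R t)) \<le> x \<bullet> (pinv A *v x)"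
    by (rule variational(1)[OF gA])
  then have "(2 * (y \<bullet> Pf x) - y \<bullet> (A *v y) / t) / t \<le> x \<bullet> (pinv A *v x)"
    using t by (simp add: matrix_vector_mult_scaleR field_simps power2_eq_square)
  then have "2 * (y \<bullet> Pf x) - y \<bullet> (A *v y) / t \<le> t * (x \<bullet> (pinv A *v x))"
    using t by (simp add: divide_le_eq mult.commute)
  then show ?thesis using e hb by linarith
qed

lemma loewner_from:
  fixes A B :: "real^'n^'n"
  assumes "transpose A = A" "transpose B = B" "\<And>x. x \<bullet> (A *v x) \<le> x \<bullet> (B *v x)"
  shows "loewner_le A B"
  unfolding loewner_le_def psd_def
proof (intro conjI allI)
  show "transpose (B - A) = B - A"
    by (rule symI) (simp add: matrix_vector_mult_diff_rdistrib inner_diff_right sym_dot[OF assms(1)] sym_dot[OF assms(2)])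
  fix x :: "real^'n"
  show "0 \<le> x \<bullet> ((B - A) *v x)"
    using assms(3)[of x] by (simp add: matrix_vector_mult_diff_rdistrib inner_diff_right)
qed

lemma qf_scale: "x \<bullet> ((c *\<^sub>R M) *v x) = c * (x \<bullet> (M *v (x::real^'n)))"
  by (simp add: scaleR_mv)

theorem proposition3:
  fixes E :: "'n::finite set set"
    and w0 w alpha :: "'n set \<Rightarrow> real"
    and b :: real
  assumes simple: "simple_graph E"
    and conn: "graph_connected E"
    and w0_pos: "\<forall>e\<in>E. 0 < w0 e"
    and alpha_range: "\<forall>e\<in>E. 0 \<le> alpha e \<and> alpha e < 1"
    and w_lower: "\<forall>e\<in>E. (1 - alpha e) * w0 e \<le> w e"
    and w_upper: "\<forall>e\<in>E. w e \<le> (1 + alpha e) * w0 e"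
    and b_nz: "b \<noteq> 0"
    and a_lt1: "spec_norm (pinv (laplacian E w0) ** laplacian E (\<lambda>e. alpha e * w0 e)) < 1"
  shows
    "let L0 = laplacian E w0; L = laplacian E w;
         \<Delta> = laplacian E (\<lambda>e. alpha e * w0 e);
         a = spec_norm (pinv L0 ** \<Delta>);
         c = spec_norm (\<Delta> ** pinv L0);
         eps_minus = c / (1 + c); eps_plus = c / (1 - c);
         \<Sigma> = (b\<^sup>2 / 2) *\<^sub>R pinv L; \<Sigma>0 = (b\<^sup>2 / 2) *\<^sub>R pinv L0
     in loewner_le ((1 - a) *\<^sub>R L0) L \<and> loewner_le L ((1 + a) *\<^sub>R L0) \<and>
        loewner_le ((1 - eps_minus) *\<^sub>R \<Sigma>0) \<Sigma> \<and> loewner_le \<Sigma> ((1 + eps_plus) *\<^sub>R \<Sigma>0)"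
proof -
  define L0 where "L0 = laplacian E w0"
  define L where "L = laplacian E w"
  define D where "D = laplacian E (\<lambda>e. alpha e * w0 e)"
  define a where "a = spec_norm (pinv L0 ** D)"
  define c where "c = spec_norm (D ** pinv L0)"
  define \<beta> where "\<beta> = b\<^sup>2 / 2"
  have a1: "a < 1" using a_lt1 by (simp add: a_def L0_def D_def)
  have a0: "0 \<le> a" unfolding a_def spec_norm_def by (rule onorm_pos_le) simp
  have gL0: "goodm L0" unfolding L0_def by (rule lap_good[OF simple conn w0_pos])
  have wpos: "\<forall>e\<in>E. 0 < w e"
  proof
    fix e assume "e \<in> E"
    then have "0 < (1 - alpha e) * w0 e" "(1 - alpha e) * w0 e \<le> w e"
      using alpha_range w0_pos w_lower by auto
    then show "0 < w e" by linarith
  qed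
  have gL: "goodm L" unfolding L_def by (rule lap_good[OF simple conn wpos])
  have symD: "transpose D = D" unfolding D_def by (rule lap_sym[OF simple])
  have D1: "D *v 1 = 0" unfolding D_def by (rule lap_one[OF simple])
  have symL0: "transpose L0 = L0" and symL: "transpose L = L"
    using gL0 gL by (auto simp: goodm_def)
  have ca: "c = a"
  proof -
    have "D ** pinv L0 = transpose (pinv L0 ** D)"
      by (simp add: matrix_transpose_mul symD good_pinv(1)[OF gL0])
    then show ?thesis by (simp add: c_def a_def spec_norm_transpose)
  qed
  have ray: "x \<bullet> (D *v x) \<le> a * (x \<bullet> (L0 *v x))" for x
    unfolding a_def by (rule rayleigh[OF gL0 symD D1])
  have cmp: "x \<bullet> (L0 *v x) - x \<bullet> (D *v x) \<le> x \<bullet> (L *v x) \<and>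
             x \<bullet> (L *v x) \<le> x \<bullet> (L0 *v x) + x \<bullet> (D *v x)" for x
  proof -
    have qn: "\<And>e. e \<in> E \<Longrightarrow> 0 \<le> x \<bullet> (edge_mat e *v x)" by (rule edge_q_nonneg[OF simple])
    have "x \<bullet> (L0 *v x) - x \<bullet> (D *v x) = (\<Sum>e\<in>E. (w0 e - alpha e * w0 e) * (x \<bullet> (edge_mat e *v x)))"
      by (simp add: L0_def D_def lap_dot sum_subtractf[symmetric] left_diff_distrib)
    also have "\<dots> \<le> (\<Sum>e\<in>E. w e * (x \<bullet> (edge_mat e *v x)))"
    proof (rule sum_mono)
      fix e assume e: "e \<in> E"
      have "w0 e - alpha e * w0 e \<le> w e" using w_lower e by (simp add: left_diff_distrib)
      then show "(w0 e - alpha e * w0 e) * (x \<bullet> (edge_mat e *v x)) \<le> w e * (x \<bullet> (edge_mat e *v x))"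
        by (rule mult_right_mono[OF _ qn[OF e]])
    qed
    also have "\<dots> = x \<bullet> (L *v x)" by (simp add: L_def lap_dot)
    finally have l: "x \<bullet> (L0 *v x) - x \<bullet> (D *v x) \<le> x \<bullet> (L *v x)" .
    have "x \<bullet> (L *v x) = (\<Sum>e\<in>E. w e * (x \<bullet> (edge_mat e *v x)))" by (simp add: L_def lap_dot)
    also have "\<dots> \<le> (\<Sum>e\<in>E. (w0 e + alpha e * w0 e) * (x \<bullet> (edge_mat e *v x)))"
    proof (rule sum_mono)
      fix e assume e: "e \<in> E"
      have "w e \<le> w0 e + alpha e * w0 e" using w_upper e by (simp add: distrib_right)
      then show "w e * (x \<bullet> (edge_mat e *v x)) \<le> (w0 e + alpha e * w0 e) * (x \<bullet> (edge_mat e *v x))"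
        by (rule mult_right_mono[OF _ qn[OF e]])
    qed
    also have "\<dots> = x \<bullet> (L0 *v x) + x \<bullet> (D *v x)"
      by (simp add: L0_def D_def lap_dot sum.distrib[symmetric] distrib_right)
    finally show ?thesis using l by blast
  qed
  have lowq: "(1 - a) * (x \<bullet> (L0 *v x)) \<le> x \<bullet> (L *v x)" for x
    using cmp[of x] ray[of x] by (simp add: left_diff_distrib)
  have upq: "x \<bullet> (L *v x) \<le> (1 + a) * (x \<bullet> (L0 *v x))" for x
    using cmp[of x] ray[of x] by (simp add: distrib_right)
  have f1: "loewner_le ((1 - a) *\<^sub>R L0) L"
    by (rule loewner_from) (simp_all add: transpose_scalar symL0 symL qf_scale lowq)
  have f2: "loewner_le L ((1 + a) *\<^sub>R L0)"
    by (rule loewner_from) (simp_all add: transpose_scalar symL0 symL qf_scale upq)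
  have sX0: "transpose (pinv L0) = pinv L0" by (rule good_pinv(1)[OF gL0])
  have sX: "transpose (pinv L) = pinv L" by (rule good_pinv(1)[OF gL])
  have b0: "0 \<le> \<beta>" by (simp add: \<beta>_def)
  have p1: "x \<bullet> (pinv L0 *v x) \<le> (1 + a) * (x \<bullet> (pinv L *v x))" for x
    by (rule pinv_compare[OF gL gL0]) (use a0 upq in auto)
  have p2: "x \<bullet> (pinv L *v x) \<le> (1 / (1 - a)) * (x \<bullet> (pinv L0 *v x))" for x
  proof (rule pinv_compare[OF gL0 gL])
    show "0 < 1 / (1 - a)" using a1 by simp
    fix x
    show "x \<bullet> (L0 *v x) \<le> 1 / (1 - a) * (x \<bullet> (L *v x))"
      using lowq[of x] a1 by (simp add: field_simps)
  qed
  have e1: "1 - c / (1 + c) = 1 / (1 + a)" using ca a0 by (simp add: field_simps)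
  have e2: "1 + c / (1 - c) = 1 / (1 - a)" using ca a1 by (simp add: field_simps)
  have f3: "loewner_le ((1 - c / (1 + c)) *\<^sub>R (\<beta> *\<^sub>R pinv L0)) (\<beta> *\<^sub>R pinv L)"
  proof (rule loewner_from)
    show "transpose ((1 - c / (1 + c)) *\<^sub>R \<beta> *\<^sub>R pinv L0) = (1 - c / (1 + c)) *\<^sub>R \<beta> *\<^sub>R pinv L0"
      by (simp add: transpose_scalar sX0)
    show "transpose (\<beta> *\<^sub>R pinv L) = \<beta> *\<^sub>R pinv L" by (simp add: transpose_scalar sX)
    fix x
    have "(1 / (1 + a)) * (x \<bullet> (pinv L0 *v x)) \<le> x \<bullet> (pinv L *v x)"
      using p1[of x] a0 by (simp add: field_simps)
    then have "\<beta> * ((1 / (1 + a)) * (x \<bullet> (pinv L0 *v x))) \<le> \<beta> * (x \<bullet> (pinv L *v x))"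
      by (rule mult_left_mono[OF _ b0])
    then show "x \<bullet> (((1 - c / (1 + c)) *\<^sub>R \<beta> *\<^sub>R pinv L0) *v x) \<le> x \<bullet> ((\<beta> *\<^sub>R pinv L) *v x)"
      by (simp add: qf_scale e1 ac_simps)
  qed
  have f4: "loewner_le (\<beta> *\<^sub>R pinv L) ((1 + c / (1 - c)) *\<^sub>R (\<beta> *\<^sub>R pinv L0))"
  proof (rule loewner_from)
    show "transpose ((1 + c / (1 - c)) *\<^sub>R \<beta> *\<^sub>R pinv L0) = (1 + c / (1 - c)) *\<^sub>R \<beta> *\<^sub>R pinv L0"
      by (simp add: transpose_scalar sX0)
    show "transpose (\<beta> *\<^sub>R pinv L) = \<beta> *\<^sub>R pinv L" by (simp add: transpose_scalar sX)
    fix x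
    have "\<beta> * (x \<bullet> (pinv L *v x)) \<le> \<beta> * ((1 / (1 - a)) * (x \<bullet> (pinv L0 *v x)))"
      by (rule mult_left_mono[OF p2 b0])
    then show "x \<bullet> ((\<beta> *\<^sub>R pinv L) *v x) \<le> x \<bullet> (((1 + c / (1 - c)) *\<^sub>R \<beta> *\<^sub>R pinv L0) *v x)"
      by (simp add: qf_scale e2 ac_simps)
  qed
  show ?thesis
    unfolding Let_def
    using f1 f2 f3 f4 unfolding L0_def L_def D_def a_def c_def \<beta>_def by blast
qed

end
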